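(* Let $p$ be a prime and $G=S^1\times C_p$. Then $G$ is not a BU-group of type II: there exist fixed-point-free orthogonal $G$-representations $V,W$ with $\dim V=\dim W$ and a $G$-map $f:S(V)\to S(W)$ with $\deg f=0$.
   Context: An orthogonal $G$-representation $V$ is fixed-point-free if $V^G=0$; $S(V)$ denotes its unit sphere, and a $G$-map is a continuous $G$-equivariant map. $G$ is a BU-group of type II if for all fixed-point-free orthogonal $G$-representations $V,W$ with $\dim V=\dim W$, every $G$-map $f:S(V)\to S(W)$ has $\deg f\neq 0$. *)

theory Defs
  imports "HOL-Analysis.Analysis" "HOL-Homology.Homology"
begin

definition Gcar :: "nat \<Rightarrow> (complex \<times> nat) set" where
  "Gcar p = {(z, k). cmod z = 1 \<and> k < p}"

definition Gmul :: "nat \<Rightarrow> complex \<times> nat \<Rightarrow> complex \<times> nat \<Rightarrow> complex \<times> nat" where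
  "Gmul p g h = (fst g * fst h, (snd g + snd h) mod p)"

text \<open>Linear action of an (n+1)x(n+1) matrix (indices 0..n) on R^(n+1),
  the latter realised as functions nat => real vanishing above n
  (the carrier of Euclidean_space (Suc n)).\<close>
definition mat_act :: "nat \<Rightarrow> (nat \<Rightarrow> nat \<Rightarrow> real) \<Rightarrow> (nat \<Rightarrow> real) \<Rightarrow> nat \<Rightarrow> real" where
  "mat_act n A x = (\<lambda>i. if i \<le> n then (\<Sum>j\<le>n. A i j * x j) else 0)"

definition orth_rep :: "nat \<Rightarrow> nat \<Rightarrow> (complex \<times> nat \<Rightarrow> nat \<Rightarrow> nat \<Rightarrow> real) \<Rightarrow> bool" where
  "orth_rep p n M \<longleftrightarrow>
     (\<forall>g\<in>Gcar p. \<forall>i\<le>n. \<forall>j\<le>n. (\<Sum>k\<le>n. M g k i * M g k j) = (if i = j then 1 else 0)) \<and>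
     (\<forall>i\<le>n. \<forall>j\<le>n. M (1, 0) i j = (if i = j then 1 else 0)) \<and>
     (\<forall>g\<in>Gcar p. \<forall>h\<in>Gcar p. \<forall>i\<le>n. \<forall>j\<le>n.
        M (Gmul p g h) i j = (\<Sum>k\<le>n. M g i k * M h k j)) \<and>
     (\<forall>k<p. \<forall>i\<le>n. \<forall>j\<le>n. continuous_on (sphere 0 1) (\<lambda>z. M (z, k) i j))"

definition fixed_point_free :: "nat \<Rightarrow> nat \<Rightarrow> (complex \<times> nat \<Rightarrow> nat \<Rightarrow> nat \<Rightarrow> real) \<Rightarrow> bool" where
  "fixed_point_free p n M \<longleftrightarrow>
     (\<forall>x. (\<forall>i>n. x i = 0) \<and> (\<forall>g\<in>Gcar p. mat_act n (M g) x = x) \<longrightarrow> (\<forall>i. x i = 0))"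

text \<open>A G-map S(V) -> S(W), with V, W both of dimension n+1, so S(V), S(W)
  are the n-sphere nsphere n.\<close>
definition G_map :: "nat \<Rightarrow> nat \<Rightarrow> (complex \<times> nat \<Rightarrow> nat \<Rightarrow> nat \<Rightarrow> real)
    \<Rightarrow> (complex \<times> nat \<Rightarrow> nat \<Rightarrow> nat \<Rightarrow> real) \<Rightarrow> ((nat \<Rightarrow> real) \<Rightarrow> nat \<Rightarrow> real) \<Rightarrow> bool" where
  "G_map p n M N f \<longleftrightarrow>
     continuous_map (nsphere n) (nsphere n) f \<and>
     (\<forall>g\<in>Gcar p. \<forall>x\<in>topspace (nsphere n). f (mat_act n (M g) x) = mat_act n (N g) (f x))"

end

theory Submission
  imports Defs
begin


definition zeta :: "nat \<Rightarrow> complex" where "zeta p = cis (2*pi/p)"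

lemma zeta_pow_p: "p > 0 \<Longrightarrow> zeta p ^ p = 1"
  unfolding zeta_def Complex.DeMoivre by simp

lemma zeta_norm[simp]: "norm (zeta p) = 1" by (simp add: zeta_def)

lemma zeta_pow_mod: assumes "p > 0" shows "zeta p ^ m = zeta p ^ (m mod p)"
proof -
  have "zeta p ^ m = zeta p ^ (p * (m div p) + m mod p)" by simp
  also have "\<dots> = (zeta p ^ p) ^ (m div p) * zeta p ^ (m mod p)"
    by (metis power_add power_mult)
  finally show ?thesis using zeta_pow_p[OF assms] by simp
qed

lemma zeta_mult: assumes "p > 0" shows "zeta p ^ ((a + b) mod p) = zeta p ^ a * zeta p ^ b"
  using zeta_pow_mod[OF assms, of "a+b"] by (simp add: power_add)

lemma zeta_ne1: assumes "p \<ge> 2" shows "zeta p \<noteq> 1"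
proof
  assume "zeta p = 1"
  then have "cos (2*pi/p) = 1" unfolding zeta_def by (metis cis.sel(1) one_complex.sel(1))
  then obtain n :: int where n: "2*pi/p = real_of_int n*2*pi" using cos_one_2pi_int[THEN iffD1] by blast
  then have e: "2*pi/real p = 2*pi*real_of_int n" by simp
  have "1/real p = (2*pi/real p)/(2*pi)" by simp
  also have "\<dots> = real_of_int n" using e by simp
  finally have "1/real p = n" .
  moreover have "0 < 1/real p" "1/real p < 1" using assms by auto
  ultimately have "0 < real_of_int n \<and> real_of_int n < 1" by simp
  then have "0 < n \<and> n < 1" by simp
  then show False by presburger
qed

definition halfpi :: "nat \<Rightarrow> complex" where "halfpi p = cis (pi/p)"
lemma halfpi_pow: "p > 0 \<Longrightarrow> halfpi p ^ p = -1"
  unfolding halfpi_def Complex.DeMoivre by simp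



definition toC :: "(nat \<Rightarrow> real) \<Rightarrow> nat \<Rightarrow> complex" where
  "toC x j = Complex (x (2*j)) (x (2*j+1))"

definition fromC :: "(nat \<Rightarrow> complex) \<Rightarrow> nat \<Rightarrow> real" where
  "fromC Y i = (if i \<le> 5 then (if even i then Re (Y (i div 2)) else Im (Y (i div 2))) else 0)"

definition rotmat :: "(nat \<Rightarrow> complex) \<Rightarrow> nat \<Rightarrow> nat \<Rightarrow> real" where
  "rotmat c i j = (if i div 2 = j div 2 then
     (if even i then (if even j then Re (c (i div 2)) else - Im (c (i div 2)))
      else (if even j then Im (c (i div 2)) else Re (c (i div 2)))) else 0)"

lemma sum5: "(\<Sum>j\<le>(5::nat). h j) = h 0 + h 1 + h 2 + h 3 + h 4 + (h 5 :: real)"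
  by (simp add: numeral_eq_Suc atMost_Suc add.assoc add.commute add.left_commute)

lemma le5: "(i::nat) \<le> 5 \<longleftrightarrow> i = 0 \<or> i = 1 \<or> i = 2 \<or> i = 3 \<or> i = 4 \<or> i = 5" by auto

lemma mat_act_rot: "mat_act 5 (rotmat c) x = fromC (\<lambda>j. c j * toC x j)"
proof
  fix i show "mat_act 5 (rotmat c) x i = fromC (\<lambda>j. c j * toC x j) i"
    unfolding mat_act_def fromC_def
    by (cases "i \<le> 5") (auto simp: le5 sum5 rotmat_def toC_def)
qed

lemma toC_fromC: "j < 3 \<Longrightarrow> toC (fromC Y) j = Y j"
proof -
  assume "j < 3" then have "j = 0 \<or> j = 1 \<or> j = 2" by auto
  then show ?thesis by (elim disjE; simp add: toC_def fromC_def complex_eq_iff)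
qed

lemma fromC_toC: "(\<forall>i>5. x i = 0) \<Longrightarrow> fromC (toC x) = x"
proof
  fix i assume "\<forall>i>5. x i = 0" then show "fromC (toC x) i = x i"
    by (cases "i \<le> 5") (auto simp: le5 fromC_def toC_def)
qed

lemma fromC_cong: "(\<And>j. j < 3 \<Longrightarrow> Y j = Z j) \<Longrightarrow> fromC Y = fromC Z"
  unfolding fromC_def by (intro ext) (auto simp: le5)

lemma fromC_eq_iff: "fromC Y = fromC Z \<longleftrightarrow> (\<forall>j<3. Y j = Z j)"
  by (metis fromC_cong toC_fromC)

lemma sumsq_fromC: "(\<Sum>i\<le>5. fromC Y i ^ 2) = (cmod (Y 0))^2 + (cmod (Y 1))^2 + (cmod (Y 2))^2"
  by (simp add: sum5 fromC_def cmod_power2)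

lemma rot_orth: assumes "\<And>j. cmod (c j) = 1" "i \<le> 5" "j \<le> 5"
  shows "(\<Sum>k\<le>5. rotmat c k i * rotmat c k j) = (if i = j then 1 else 0)"
proof -
  have "\<And>j. Re (c j) ^ 2 + Im (c j) ^ 2 = 1" using assms(1) by (metis cmod_power2 power_one)
  then have h: "\<And>j. Re (c j) * Re (c j) + Im (c j) * Im (c j) = 1" by (simp add: power2_eq_square)
  show ?thesis using assms(2,3) unfolding le5
    by (elim disjE; simp add: sum5 rotmat_def; metis h add.commute)
qed

lemma rot_mult: assumes "i \<le> 5" "j \<le> 5"
  shows "rotmat (\<lambda>j. a j * b j) i j = (\<Sum>k\<le>5. rotmat a i k * rotmat b k j)"
  using assms unfolding le5
  by (elim disjE; simp add: sum5 rotmat_def)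

lemma rot_one: assumes "i \<le> 5" "j \<le> 5" shows "rotmat (\<lambda>_. 1) i j = (if i = j then 1 else 0)"
  using assms unfolding le5 by (elim disjE; simp add: rotmat_def)



lemma orth_rep_rot:
  assumes p: "p > 0"
   and norm: "\<And>g j. g \<in> Gcar p \<Longrightarrow> cmod (c g j) = 1"
   and one: "\<And>j. c (1, 0) j = 1"
   and mult: "\<And>g h j. g \<in> Gcar p \<Longrightarrow> h \<in> Gcar p \<Longrightarrow> c (Gmul p g h) j = c g j * c h j"
   and cont: "\<And>k j. continuous_on (sphere 0 1) (\<lambda>z. c (z, k) j)"
  shows "orth_rep p 5 (\<lambda>g. rotmat (c g))"
  unfolding orth_rep_def
proof (intro conjI ballI allI impI)
  fix g and i j :: nat assume "g \<in> Gcar p" "i \<le> 5" "j \<le> 5"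
  then show "(\<Sum>k\<le>5. rotmat (c g) k i * rotmat (c g) k j) = (if i = j then 1 else 0)"
    using rot_orth[of "c g" i j] norm by blast
next
  fix i j :: nat assume "i \<le> 5" "j \<le> 5"
  then show "rotmat (c (1, 0)) i j = (if i = j then 1 else 0)"
    proof -
    have "c (1,0) = (\<lambda>_. 1)" by (rule ext) (rule one)
    then show ?thesis using rot_one[of i j] \<open>i \<le> 5\<close> \<open>j \<le> 5\<close> by simp
  qed
next
  fix g h and i j :: nat assume "g \<in> Gcar p" "h \<in> Gcar p" "i \<le> 5" "j \<le> 5"
  then show "rotmat (c (Gmul p g h)) i j = (\<Sum>k\<le>5. rotmat (c g) i k * rotmat (c h) k j)"
    proof -
    have "c (Gmul p g h) = (\<lambda>j. c g j * c h j)" by (rule ext) (rule mult; fact)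
    then show ?thesis using rot_mult[of i j "c g" "c h"] \<open>i \<le> 5\<close> \<open>j \<le> 5\<close> by simp
  qed
next
  fix k i j :: nat
  show "continuous_on (sphere 0 1) (\<lambda>z. rotmat (c (z, k)) i j)"
    unfolding rotmat_def
    by (cases "i div 2 = j div 2"; cases "even i"; cases "even j"; simp; intro continuous_intros cont)
qed



definition cV :: "nat \<Rightarrow> complex \<times> nat \<Rightarrow> nat \<Rightarrow> complex" where
 "cV p g j = (if j = 0 then zeta p ^ snd g else if j = 1 then fst g * zeta p ^ snd g
    else if j = 2 then fst g * zeta p ^ snd g * zeta p ^ snd g else 1)"

definition cW :: "nat \<Rightarrow> complex \<times> nat \<Rightarrow> nat \<Rightarrow> complex" where
 "cW p g j = (if j = 0 then zeta p ^ snd g else if j = 1 then zeta p ^ snd g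
    else if j = 2 then fst g ^ p else 1)"

lemma orth_V: assumes "p > 0" shows "orth_rep p 5 (\<lambda>g. rotmat (cV p g))"
proof (rule orth_rep_rot[OF assms])
  fix g j assume "g \<in> Gcar p" then show "cmod (cV p g j) = 1"
    by (auto simp: cV_def Gcar_def norm_mult norm_power)
next
  fix j show "cV p (1, 0) j = 1" by (simp add: cV_def)
next
  fix g h j assume "g \<in> Gcar p" "h \<in> Gcar p"
  then show "cV p (Gmul p g h) j = cV p g j * cV p h j"
    by (cases "j=0"; cases "j=1"; cases "j=2"; simp add: cV_def Gmul_def zeta_mult[OF assms] mult_ac)
next
  fix k j show "continuous_on (sphere 0 1) (\<lambda>z. cV p (z, k) j)"
    unfolding cV_def by (cases "j=0"; cases "j=1"; cases "j=2"; simp; intro continuous_intros)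
qed

lemma orth_W: assumes "p > 0" shows "orth_rep p 5 (\<lambda>g. rotmat (cW p g))"
proof (rule orth_rep_rot[OF assms])
  fix g j assume "g \<in> Gcar p" then show "cmod (cW p g j) = 1"
    by (auto simp: cW_def Gcar_def norm_mult norm_power)
next
  fix j show "cW p (1, 0) j = 1" by (simp add: cW_def)
next
  fix g h j assume "g \<in> Gcar p" "h \<in> Gcar p"
  then show "cW p (Gmul p g h) j = cW p g j * cW p h j"
    by (cases "j=0"; cases "j=1"; cases "j=2"; simp add: cW_def Gmul_def zeta_mult[OF assms] power_mult_distrib)
next
  fix k j show "continuous_on (sphere 0 1) (\<lambda>z. cW p (z, k) j)"
    unfolding cW_def by (cases "j=0"; cases "j=1"; cases "j=2"; simp; intro continuous_intros)
qed

lemma fpf_rot: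
  assumes "\<And>j. j < 3 \<Longrightarrow> \<exists>g\<in>Gcar p. c g j \<noteq> 1"
  shows "fixed_point_free p 5 (\<lambda>g. rotmat (c g))"
  unfolding fixed_point_free_def
proof (intro allI impI)
  fix x :: "nat \<Rightarrow> real" and i
  assume a: "(\<forall>i>5. x i = 0) \<and> (\<forall>g\<in>Gcar p. mat_act 5 (rotmat (c g)) x = x)"
  have x: "fromC (toC x) = x" using a fromC_toC by blast
  have z: "toC x j = 0" if j: "j < 3" for j
  proof -
    obtain g where g: "g \<in> Gcar p" "c g j \<noteq> 1" using assms j by blast
    have "mat_act 5 (rotmat (c g)) x = x" using a g(1) by blast
    then have "fromC (\<lambda>j. c g j * toC x j) = fromC (toC x)" by (simp only: mat_act_rot x)
    then have "c g j * toC x j = toC x j" using j by (rule fromC_eq_iff[THEN iffD1, rule_format])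
    then show ?thesis using g(2) by simp

  qed
  have "fromC (toC x) = fromC (\<lambda>_. 0)" by (rule fromC_cong) (rule z)
  then have "x = fromC (\<lambda>_. 0)" using x by simp
  then show "x i = 0" by (simp add: fromC_def)
qed

lemma halfpi_norm[simp]: "cmod (halfpi p) = 1" by (simp add: halfpi_def)

lemma fpf_V: assumes "prime p" shows "fixed_point_free p 5 (\<lambda>g. rotmat (cV p g))"
proof (rule fpf_rot)
  fix j :: nat assume j: "j < 3"
  have p: "p \<ge> 2" using assms prime_ge_2_nat by blast
  have g1: "(1, 1) \<in> Gcar p" using p by (simp add: Gcar_def)
  have g2: "(-1, 0) \<in> Gcar p" using p by (simp add: Gcar_def)
  show "\<exists>g\<in>Gcar p. cV p g j \<noteq> 1"
  proof (cases "j = 0")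
    case True
    have "cV p (1,1) j \<noteq> 1" using True zeta_ne1[OF p] by (simp add: cV_def)
    then show ?thesis using g1 by blast
  next
    case False
    then have "j = 1 \<or> j = 2" using j by auto
    then have "cV p (-1,0) j \<noteq> 1" by (auto simp: cV_def)
    then show ?thesis using g2 by blast
  qed
qed

lemma fpf_W: assumes "prime p" shows "fixed_point_free p 5 (\<lambda>g. rotmat (cW p g))"
proof (rule fpf_rot)
  fix j :: nat assume j: "j < 3"
  have p: "p \<ge> 2" using assms prime_ge_2_nat by blast
  have g1: "(1, 1) \<in> Gcar p" using p by (simp add: Gcar_def)
  have g2: "(halfpi p, 0) \<in> Gcar p" using p by (simp add: Gcar_def)
  have h: "halfpi p ^ p = -1" using halfpi_pow p by simp
  show "\<exists>g\<in>Gcar p. cW p g j \<noteq> 1"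
  proof (cases "j < 2")
    case True
    have "cW p (1,1) j \<noteq> 1" using True zeta_ne1[OF p] by (simp add: cW_def)
    then show ?thesis using g1 by blast
  next
    case False
    then have "j = 2" using j by auto
    then have "cW p (halfpi p,0) j \<noteq> 1" using h by (simp add: cW_def)
    then show ?thesis using g2 by blast
  qed
qed



definition SS :: "(nat \<Rightarrow> real) set" where
  "SS = {x. (\<Sum>i\<le>5. x i ^ 2) = 1 \<and> (\<forall>i>5. x i = 0)}"

lemma nsphere5: "nsphere 5 = top_of_set SS"
  by (simp add: nsphere SS_def euclidean_product_topology)

lemma topspace5: "topspace (nsphere 5) = SS"
  by (simp add: nsphere5)

definition FF :: "nat \<Rightarrow> (nat \<Rightarrow> real) \<Rightarrow> nat \<Rightarrow> complex" where
  "FF p x j = (if j = 0 then toC x 0 else if j = 1 then cnj (toC x 1) * toC x 2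
     else if j = 2 then toC x 1 ^ p + toC x 2 ^ p else 0)"

definition nF :: "nat \<Rightarrow> (nat \<Rightarrow> real) \<Rightarrow> real" where
  "nF p x = sqrt ((cmod (FF p x 0))^2 + (cmod (FF p x 1))^2 + (cmod (FF p x 2))^2)"

definition fmap :: "nat \<Rightarrow> (nat \<Rightarrow> real) \<Rightarrow> nat \<Rightarrow> real" where
  "fmap p x = fromC (\<lambda>j. FF p x j / complex_of_real (nF p x))"

lemma SS_toC: assumes "x \<in> SS"
  shows "(cmod (toC x 0))^2 + (cmod (toC x 1))^2 + (cmod (toC x 2))^2 = 1"
proof -
  have "fromC (toC x) = x" using assms fromC_toC by (simp add: SS_def)
  then show ?thesis using sumsq_fromC[of "toC x"] assms by (simp add: SS_def)
qed

lemma nF_pos: assumes "p > 0" "x \<in> SS" shows "nF p x > 0"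
proof (rule ccontr)
  assume "\<not> nF p x > 0"
  then have "(cmod (FF p x 0))^2 + (cmod (FF p x 1))^2 + (cmod (FF p x 2))^2 = 0"
    unfolding nF_def by (smt (verit) real_sqrt_gt_zero zero_le_power2)
  then have h: "FF p x 0 = 0" "FF p x 1 = 0" "FF p x 2 = 0"
    by (smt (verit) zero_le_power2 norm_eq_zero power_eq_0_iff)+
  then have a0: "toC x 0 = 0" and c1: "cnj (toC x 1) * toC x 2 = 0"
    and c2: "toC x 1 ^ p + toC x 2 ^ p = 0" by (simp_all add: FF_def)
  have "toC x 1 = 0 \<and> toC x 2 = 0"
  proof (cases "toC x 1 = 0")
    case True then show ?thesis using c2 assms(1) by (simp add: power_0_left)
  next
    case False then have "toC x 2 = 0" using c1 by simp
    then show ?thesis using c2 assms(1) by (simp add: power_0_left)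
  qed
  then show False using SS_toC[OF assms(2)] a0 by simp
qed

lemma fmap_SS: assumes "p > 0" "x \<in> SS" shows "fmap p x \<in> SS"
proof -
  have n: "nF p x > 0" using nF_pos assms by blast
  have "(\<Sum>i\<le>5. fmap p x i ^ 2) =
     (cmod (FF p x 0))^2 / (nF p x)^2 + (cmod (FF p x 1))^2 / (nF p x)^2 + (cmod (FF p x 2))^2 / (nF p x)^2"
    unfolding fmap_def sumsq_fromC using n by (simp add: norm_divide power_divide)
  also have "\<dots> = ((cmod (FF p x 0))^2 + (cmod (FF p x 1))^2 + (cmod (FF p x 2))^2) / (nF p x)^2"
    by (simp add: add_divide_distrib)
  also have "\<dots> = 1" using n unfolding nF_def by simp
  finally show ?thesis unfolding SS_def by (simp add: fmap_def fromC_def)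
qed

lemma cont_coord [continuous_intros]: "continuous_on A (\<lambda>x::nat\<Rightarrow>real. x k)"
  by (rule continuous_on_subset[OF continuous_on_product_coordinates]) simp

lemma cont_FF: "continuous_on A (\<lambda>x. FF p x j)"
  unfolding FF_def toC_def
  by (cases "j=0"; cases "j=1"; cases "j=2"; simp; intro continuous_intros)

lemma cont_nF: "continuous_on A (\<lambda>x. nF p x)"
  unfolding nF_def by (intro continuous_intros cont_FF)

lemma cont_fmap: assumes "p > 0" shows "continuous_map (nsphere 5) (nsphere 5) (fmap p)"
  unfolding nsphere5 continuous_map_subtopology_eu
proof
  have nz: "\<forall>x\<in>SS. complex_of_real (nF p x) \<noteq> 0" using nF_pos[OF assms] by fastforce
  have c: "continuous_on SS (\<lambda>x. FF p x j / complex_of_real (nF p x))" for j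
    by (intro continuous_intros cont_FF cont_nF nz)
  show "continuous_on SS (fmap p)"
    unfolding fmap_def fromC_def
  proof (intro continuous_on_coordinatewise_then_product)
    fix i show "continuous_on SS (\<lambda>x. if i \<le> 5 then if even i then Re (FF p x (i div 2) / complex_of_real (nF p x))
            else Im (FF p x (i div 2) / complex_of_real (nF p x)) else 0)"
      using nz by (cases "i \<le> 5"; cases "even i"; simp; intro continuous_intros cont_FF cont_nF; simp)
  qed
  show "fmap p \<in> SS \<rightarrow> SS" using fmap_SS assms by blast
qed



lemma cnj_unit: "cmod z = 1 \<Longrightarrow> cnj z * z = 1"
  by (metis complex_norm_square mult.commute of_real_1 power_one)

lemma FF_equiv:
  assumes p: "p > 0" and g: "g \<in> Gcar p"
  shows "FF p (mat_act 5 (rotmat (cV p g)) x) j = cW p g j * FF p x j"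
proof -
  obtain z k where gz: "g = (z, k)" and z: "cmod z = 1" using g by (auto simp: Gcar_def)
  define w where "w = zeta p ^ k"
  have w: "cmod w = 1" by (simp add: w_def norm_power)
  have wp: "w ^ p = 1" unfolding w_def by (metis power_mult mult.commute power_one zeta_pow_p[OF p])
  let ?y = "mat_act 5 (rotmat (cV p g)) x"
  have y: "toC ?y j = cV p g j * toC x j" if "j < 3" for j
    unfolding mat_act_rot using toC_fromC that by blast
  have y0: "toC ?y 0 = w * toC x 0" using y[of 0] by (simp add: cV_def gz w_def)
  have y1: "toC ?y 1 = z * w * toC x 1" using y[of 1] by (simp add: cV_def gz w_def)
  have y2: "toC ?y 2 = z * w * w * toC x 2" using y[of 2] by (simp add: cV_def gz w_def)
  have e1: "cnj (z * w * a) * (z * w * w * b) = w * (cnj a * b)" for a b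
  proof -
    have "cnj (z * w * a) * (z * w * w * b) = (cnj z * z) * (cnj w * w) * (w * (cnj a * b))"
      by (simp add: mult_ac)
    then show ?thesis using cnj_unit[OF z] cnj_unit[OF w] by simp
  qed
  have e2: "(z * w * a) ^ p + (z * w * w * b) ^ p = z ^ p * (a ^ p + b ^ p)" for a b
    by (simp only: power_mult_distrib wp mult_1_right distrib_left)
  have f0: "FF p ?y 0 = cW p g 0 * FF p x 0"
    unfolding FF_def using y0 by (simp add: cW_def gz w_def)
  have f1: "FF p ?y 1 = cW p g 1 * FF p x 1"
  proof -
    have "FF p ?y 1 = cnj (toC ?y 1) * toC ?y 2" by (simp add: FF_def)
    also have "\<dots> = w * (cnj (toC x 1) * toC x 2)" unfolding y1 y2 e1 ..
    also have "\<dots> = cW p g 1 * FF p x 1" by (simp add: FF_def cW_def gz w_def)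
    finally show ?thesis .
  qed
  have f2: "FF p ?y 2 = cW p g 2 * FF p x 2"
  proof -
    have "FF p ?y 2 = toC ?y 1 ^ p + toC ?y 2 ^ p" by (simp add: FF_def)
    also have "\<dots> = z ^ p * (toC x 1 ^ p + toC x 2 ^ p)" unfolding y1 y2 e2 ..
    also have "\<dots> = cW p g 2 * FF p x 2" by (simp add: FF_def cW_def gz)
    finally show ?thesis .
  qed
  have f3: "FF p ?y j = cW p g j * FF p x j" if "j > 2" for j
    using that by (simp add: FF_def)
  show ?thesis
  proof -
    have "j = 0 \<or> j = 1 \<or> j = 2 \<or> j > 2" by auto
    then show ?thesis using f0 f1 f2 f3 by blast
  qed
qed

lemma nF_equiv: assumes p: "p > 0" and g: "g \<in> Gcar p"
  shows "nF p (mat_act 5 (rotmat (cV p g)) x) = nF p x"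
proof -
  have n: "cmod (cW p g j) = 1" for j using g by (auto simp: cW_def Gcar_def norm_mult norm_power)
  show ?thesis unfolding nF_def FF_equiv[OF p g] norm_mult n by simp
qed

lemma fmap_equiv: assumes p: "p > 0" and g: "g \<in> Gcar p"
  shows "fmap p (mat_act 5 (rotmat (cV p g)) x) = mat_act 5 (rotmat (cW p g)) (fmap p x)"
  unfolding fmap_def FF_equiv[OF p g] nF_equiv[OF p g]
  unfolding mat_act_rot
  by (rule fromC_cong) (simp add: toC_fromC)

definition qq :: "nat \<Rightarrow> real" where "qq = fromC (\<lambda>j. if j = 1 then 1 else 0)"

lemma qq_SS: "qq \<in> SS"
  unfolding SS_def qq_def using sumsq_fromC[of "\<lambda>j. if j = 1 then 1 else 0"]
  by (simp add: fromC_def)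

lemma qq_not_image: assumes p: "p > 0" and x: "x \<in> SS" shows "fmap p x \<noteq> qq"
proof
  assume "fmap p x = qq"
  then have e0: "fromC (\<lambda>j. FF p x j / complex_of_real (nF p x)) = fromC (\<lambda>j. if j = 1 then 1 else 0)"
    unfolding fmap_def qq_def .
  have e: "FF p x j / complex_of_real (nF p x) = (if j = 1 then 1 else 0)" if "j < 3" for j
    using fromC_eq_iff[THEN iffD1, rule_format, OF e0 that] by simp
  have n: "nF p x > 0" using nF_pos[OF p x] .
  then have nz: "complex_of_real (nF p x) \<noteq> 0" by simp
  define a where "a = toC x 1"
  define b where "b = toC x 2"
  have "FF p x 1 = complex_of_real (nF p x)" using e[of 1] nz by (simp add: divide_eq_eq)
  then have c1: "cnj a * b = complex_of_real (nF p x)" by (simp add: FF_def a_def b_def)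
  have "FF p x 2 = 0" using e[of 2] nz by simp
  then have c2: "a ^ p + b ^ p = 0" by (simp add: FF_def a_def b_def)
  have a0: "a \<noteq> 0" using c1 n by auto
  define s where "s = nF p x / (cmod a)^2"
  have s: "s > 0" using n a0 by (simp add: s_def)
  have "a * (cnj a * b) = a * complex_of_real (nF p x)" using c1 by simp
  moreover have "complex_of_real ((cmod a)^2) * b = a * (cnj a * b)"
    by (simp only: complex_norm_square mult.assoc)
  ultimately have eq: "complex_of_real ((cmod a)^2) * b = complex_of_real (nF p x) * a"
    by (metis mult.commute)
  have na: "complex_of_real ((cmod a)^2) \<noteq> 0" using a0 by simp
  have "b = complex_of_real (nF p x) * a / complex_of_real ((cmod a)^2)"
    using eq na by (simp add: eq_divide_eq mult.commute)
  then have bs: "b = complex_of_real s * a"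
    by (simp add: s_def of_real_divide)
  have "a ^ p + b ^ p = complex_of_real (1 + s ^ p) * a ^ p"
    unfolding bs by (simp add: power_mult_distrib distrib_right)
  then have "complex_of_real (1 + s ^ p) * a ^ p = 0" using c2 by simp
  moreover have "1 + s ^ p \<noteq> 0" using s by (smt (verit) zero_less_power)
  ultimately have "a ^ p = 0" by (simp only: mult_eq_0_iff of_real_eq_0_iff) blast
  then show False using a0 by simp
qed


theorem proposition4p1:
  fixes p :: nat
  assumes "prime p"
  shows "\<exists>n M N f. orth_rep p n M \<and> orth_rep p n N \<and>
           fixed_point_free p n M \<and> fixed_point_free p n N \<and>
           G_map p n M N f \<and> Brouwer_degree2 n f = 0"
proof -
  have p: "p > 0" using assms prime_gt_0_nat by blast
  have G: "G_map p 5 (\<lambda>g. rotmat (cV p g)) (\<lambda>g. rotmat (cW p g)) (fmap p)"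
    unfolding G_map_def using cont_fmap[OF p] fmap_equiv[OF p] by blast
  have "qq \<in> topspace (nsphere 5)" using qq_SS topspace5 by simp
  moreover have "qq \<notin> fmap p ` topspace (nsphere 5)" using qq_not_image[OF p] topspace5 by (metis imageE)
  ultimately have "fmap p ` topspace (nsphere 5) \<noteq> topspace (nsphere 5)" by blast
  then have D: "Brouwer_degree2 5 (fmap p) = 0"
    by (rule Brouwer_degree2_nonsurjective[OF cont_fmap[OF p]])
  show ?thesis
    using orth_V[OF p] orth_W[OF p] fpf_V[OF assms] fpf_W[OF assms] G D by blast
qed

end
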